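(* Let $G$, $k$, $\epsilon$, $M$ be as in the standing setting, and let $V_1$ and $T$ be as defined in the context. Then: (i) every vertex of $V_1$ has exactly one neighbor of degree at least $k-M$, and all its other neighbors have degree $2$; (ii) $V_1$ is a stable set in $G$; (iii) $V_1\cap T=\emptyset$.
   Context: Standing setting: let $0<\epsilon\le 1/20$, $M=6/\epsilon$, and let $k$ be an integer with $k\ge 3/\epsilon^2$ (so $k\ge 3M$). Let $G$ be a finite simple graph with $\Delta(G)\le k$ such that the square of $G$ is not list $(k+1)$-colorable, while the square of every proper subgraph of $G$ is list $(k+1)$-colorable. Here the square of a graph has the same vertex set, two distinct vertices being adjacent iff they are adjacent or have a common neighbor; it is list $(k+1)$-colorable if for every assignment of lists of $k+1$ colors to the vertices there is a proper coloring of the square from the lists. $d(v)$ denotes the degree of $v$ in $G$. Definitions: $V_1$ is the smallest set of vertices of $G$ with the following property: every vertex $u$ with $d(u)\le M-1$ that has $d(u)-1$ neighbors $v_1,\dots,v_{d(u)-1}$, all of degree $2$, such that the other neighbor of each of $v_2,\dots,v_{d(u)-1}$ belongs to $V_1$ and the other neighbor of $v_1$ has degree at most $M-1$ (not necessarily in $V_1$), belongs to $V_1$. $T$ is the set of vertices of degree $2$ both of whose neighbors lie in $V_1$. *)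

theory Defs
  imports Complex_Main
begin

definition simple_graph :: "'a set \<Rightarrow> ('a \<Rightarrow> 'a \<Rightarrow> bool) \<Rightarrow> bool" where
  "simple_graph V E \<longleftrightarrow> finite V \<and> (\<forall>u v. E u v \<longrightarrow> u \<in> V \<and> v \<in> V)
     \<and> (\<forall>u v. E u v \<longrightarrow> E v u) \<and> (\<forall>u. \<not> E u u)"

definition deg :: "'a set \<Rightarrow> ('a \<Rightarrow> 'a \<Rightarrow> bool) \<Rightarrow> 'a \<Rightarrow> nat" where
  "deg V E v = card {u \<in> V. E v u}"

definition sq_adj :: "('a \<Rightarrow> 'a \<Rightarrow> bool) \<Rightarrow> 'a \<Rightarrow> 'a \<Rightarrow> bool" where
  "sq_adj E u v \<longleftrightarrow> u \<noteq> v \<and> (E u v \<or> (\<exists>w. E u w \<and> E w v))"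

definition sq_list_colorable :: "'a set \<Rightarrow> ('a \<Rightarrow> 'a \<Rightarrow> bool) \<Rightarrow> nat \<Rightarrow> bool" where
  "sq_list_colorable V E n \<longleftrightarrow>
     (\<forall>L :: 'a \<Rightarrow> nat set. (\<forall>v\<in>V. finite (L v) \<and> card (L v) = n) \<longrightarrow>
        (\<exists>c. (\<forall>v\<in>V. c v \<in> L v) \<and> (\<forall>u\<in>V. \<forall>v\<in>V. sq_adj E u v \<longrightarrow> c u \<noteq> c v)))"

definition proper_subgraph ::
  "'a set \<Rightarrow> ('a \<Rightarrow> 'a \<Rightarrow> bool) \<Rightarrow> 'a set \<Rightarrow> ('a \<Rightarrow> 'a \<Rightarrow> bool) \<Rightarrow> bool" where
  "proper_subgraph V' E' V E \<longleftrightarrow> simple_graph V' E' \<and> V' \<subseteq> V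
     \<and> (\<forall>u v. E' u v \<longrightarrow> E u v) \<and> (V', E') \<noteq> (V, E)"

text \<open>A vertex u with d(u) \<le> M-1 enters V_1 if it has d(u)-1 distinct neighbours
  v_1 (here v1) and v_2..v_{d(u)-1} (here the set S, with card S = d(u)-2), all of
  degree 2, such that the other neighbour of every vertex in S is in V_1 and the other
  neighbour of v1 has degree at most M-1.\<close>
inductive_set V1set :: "'a set \<Rightarrow> ('a \<Rightarrow> 'a \<Rightarrow> bool) \<Rightarrow> real \<Rightarrow> 'a set"
  for V E M where
  "\<lbrakk> u \<in> V; real (deg V E u) \<le> M - 1; 2 \<le> deg V E u;
     E u v1; v1 \<notin> S; finite S; card S = deg V E u - 2; \<forall>w\<in>S. E u w;
     deg V E v1 = 2; \<forall>w\<in>S. deg V E w = 2;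
     \<forall>x. E v1 x \<and> x \<noteq> u \<longrightarrow> real (deg V E x) \<le> M - 1;
     \<forall>w\<in>S. \<forall>x. E w x \<and> x \<noteq> u \<longrightarrow> x \<in> V1set V E M \<rbrakk>
   \<Longrightarrow> u \<in> V1set V E M"

definition Tset :: "'a set \<Rightarrow> ('a \<Rightarrow> 'a \<Rightarrow> bool) \<Rightarrow> real \<Rightarrow> 'a set" where
  "Tset V E M = {v \<in> V. deg V E v = 2 \<and> (\<forall>x. E v x \<longrightarrow> x \<in> V1set V E M)}"

end

theory Submission
  imports Defs
begin
definition extP :: "'a set \<Rightarrow> ('a \<Rightarrow> 'a \<Rightarrow> bool) \<Rightarrow> ('a \<Rightarrow> nat set) \<Rightarrow> 'a set \<Rightarrow> bool" where
 "extP V E L X \<longleftrightarrow> (\<forall>c. (\<forall>v\<in>V-X. c v \<in> L v) \<and> (\<forall>a\<in>V-X. \<forall>b\<in>V-X. sq_adj E a b \<longrightarrow> c a \<noteq> c b) \<longrightarrow>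
   (\<exists>c'. (\<forall>v\<in>V. c' v \<in> L v) \<and> (\<forall>a\<in>V. \<forall>b\<in>V. sq_adj E a b \<longrightarrow> c' a \<noteq> c' b)))"

lemma extP_empty: "extP V E L {}" unfolding extP_def by auto

lemma sq_adj_sym: "(\<forall>u v. E u v \<longrightarrow> E v u) \<Longrightarrow> sq_adj E a b \<Longrightarrow> sq_adj E b a"
  unfolding sq_adj_def by blast

lemma extP_step:
  assumes fin: "finite V" and sym: "\<forall>u v. E u v \<longrightarrow> E v u"
    and x: "x \<in> V" "x \<notin> Y" and L: "finite (L x)" "card (L x) = k + 1"
    and cnt: "card {y \<in> V - insert x Y. sq_adj E x y} \<le> k"
    and IH: "extP V E L Y"
  shows "extP V E L (insert x Y)"
  unfolding extP_def
proof (intro allI impI)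
  fix c assume c: "(\<forall>v\<in>V - insert x Y. c v \<in> L v) \<and> (\<forall>a\<in>V - insert x Y. \<forall>b\<in>V - insert x Y. sq_adj E a b \<longrightarrow> c a \<noteq> c b)"
  let ?N = "{y \<in> V - insert x Y. sq_adj E x y}"
  have finN: "finite ?N" using fin by auto
  have ci: "card (c ` ?N) \<le> k" using card_image_le[OF finN, of c] cnt by linarith
  have "L x - c ` ?N \<noteq> {}"
  proof
    assume "L x - c ` ?N = {}"
    then have "L x \<subseteq> c ` ?N" by blast
    then have "card (L x) \<le> card (c ` ?N)" using finN by (simp add: card_mono)
    then show False using ci L by linarith
  qed
  then obtain col where col: "col \<in> L x" "col \<notin> c ` ?N" by blast
  define c1 where "c1 = c(x := col)"
  have VY: "V - Y = insert x (V - insert x Y)" using x by auto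
  have l1: "\<forall>v\<in>V - Y. c1 v \<in> L v" using c col by (auto simp: c1_def VY)
  have l2: "\<forall>a\<in>V - Y. \<forall>b\<in>V - Y. sq_adj E a b \<longrightarrow> c1 a \<noteq> c1 b"
  proof (intro ballI impI)
    fix a b assume a: "a \<in> V - Y" and b: "b \<in> V - Y" and s: "sq_adj E a b"
    have ab: "a \<noteq> b" using s by (simp add: sq_adj_def)
    show "c1 a \<noteq> c1 b"
    proof (cases "a = x")
      case True
      then have "b \<in> ?N" using b ab s by auto
      then show ?thesis using True col ab by (auto simp: c1_def)
    next
      case False
      note F = False
      show ?thesis
      proof (cases "b = x")
        case True
        then have "a \<in> ?N" using a F s sq_adj_sym[OF sym s] by auto
        then show ?thesis using True col ab by (auto simp: c1_def)
      next
        case False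
        then show ?thesis using F a b s c by (auto simp: c1_def)
      qed
    qed
  qed
  show "\<exists>c'. (\<forall>v\<in>V. c' v \<in> L v) \<and> (\<forall>a\<in>V. \<forall>b\<in>V. sq_adj E a b \<longrightarrow> c' a \<noteq> c' b)"
    using IH l1 l2 unfolding extP_def by blast
qed

lemma extP_union:
  assumes fin: "finite V" and sym: "\<forall>u v. E u v \<longrightarrow> E v u" and fZ: "finite Z"
   and Z: "\<forall>x\<in>Z. x \<in> V \<and> card {y\<in>V. sq_adj E x y} \<le> k"
   and L: "\<forall>v\<in>V. finite (L v) \<and> card (L v) = k+1"
   and Y: "extP V E L Y"
  shows "extP V E L (Y \<union> Z)"
  using fZ Z
proof (induction Z rule: finite_induct)
  case empty then show ?case using Y by simp
next
  case (insert x F)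
  show ?case
  proof (cases "x \<in> Y \<union> F")
    case True then have "Y \<union> insert x F = Y \<union> F" by auto
    with insert show ?thesis by simp
  next
    case False
    have e: "Y \<union> insert x F = insert x (Y \<union> F)" by auto
    have xV: "x \<in> V" using insert by auto
    have "card {y \<in> V - insert x (Y \<union> F). sq_adj E x y} \<le> card {y\<in>V. sq_adj E x y}"
      by (rule card_mono) (use fin in auto)
    also have "\<dots> \<le> k" using insert by auto
    finally have cnt: "card {y \<in> V - insert x (Y \<union> F). sq_adj E x y} \<le> k" .
    have "extP V E L (insert x (Y \<union> F))"
      by (rule extP_step[OF fin sym xV False _ _ cnt]) (use L xV insert in auto)
    then show ?thesis using e by simp
  qed
qed

lemma sq_card_bound:
  assumes G: "simple_graph V E"
  shows "card {y\<in>V. sq_adj E t y} \<le> deg V E t + (\<Sum>w\<in>{y\<in>V. E t y}. deg V E w)"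
proof -
  have fin: "finite V" using G by (simp add: simple_graph_def)
  let ?N = "{y\<in>V. E t y}"
  have sub: "{y\<in>V. sq_adj E t y} \<subseteq> ?N \<union> (\<Union>w\<in>?N. {y\<in>V. E w y})"
    using G unfolding sq_adj_def simple_graph_def by blast
  have "card {y\<in>V. sq_adj E t y} \<le> card (?N \<union> (\<Union>w\<in>?N. {y\<in>V. E w y}))"
    by (rule card_mono[OF _ sub]) (use fin in auto)
  also have "\<dots> \<le> card ?N + card (\<Union>w\<in>?N. {y\<in>V. E w y})" by (rule card_Un_le)
  also have "card (\<Union>w\<in>?N. {y\<in>V. E w y}) \<le> (\<Sum>w\<in>?N. card {y\<in>V. E w y})"
    by (rule card_UN_le) (use fin in auto)
  finally show ?thesis by (simp add: deg_def)
qed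

lemma deg2_nbrs:
  assumes G: "simple_graph V E" and d: "deg V E t = 2" and tu: "E t u"
  shows "\<exists>z. E t z \<and> z \<noteq> u \<and> (\<forall>y. E t y \<longrightarrow> y = u \<or> y = z)"
proof -
  have "card {y\<in>V. E t y} = 2" using d by (simp add: deg_def)
  then obtain a b where ab: "{y\<in>V. E t y} = {a,b}" "a \<noteq> b" by (auto simp: card_2_iff)
  have uV: "u \<in> V" using G tu by (simp add: simple_graph_def)
  have "\<forall>y. E t y \<longrightarrow> y \<in> {a,b}" using ab(1) G by (auto simp: simple_graph_def)
  moreover have "E t a" "E t b" using ab(1) by blast+
  moreover have "u = a \<or> u = b" using ab(1) uV tu by blast
  ultimately show ?thesis using ab(2) by blast
qed

lemma V1_props: "u \<in> V1set V E M \<Longrightarrow> u \<in> V \<and> real (deg V E u) \<le> M - 1 \<and> 2 \<le> deg V E u"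
  by (erule V1set.cases) auto

lemma colorable_from:
  assumes G: "simple_graph V E"
    and minimal: "\<forall>V' E'. proper_subgraph V' E' V E \<longrightarrow> sq_list_colorable V' E' (k + 1)"
    and uX: "u \<in> X" "u \<in> V"
    and dmg: "\<forall>w\<in>X. \<forall>a b. E w a \<longrightarrow> E w b \<longrightarrow> a \<notin> X \<longrightarrow> b \<notin> X \<longrightarrow> a = b"
    and ext: "\<forall>L. (\<forall>v\<in>V. finite (L v) \<and> card (L v) = k+1) \<longrightarrow> extP V E L X"
  shows "sq_list_colorable V E (k+1)"
  unfolding sq_list_colorable_def
proof (intro allI impI)
  fix L :: "'a \<Rightarrow> nat set" assume L: "\<forall>v\<in>V. finite (L v) \<and> card (L v) = k + 1"
  define E' where "E' = (\<lambda>a b. E a b \<and> a \<notin> X \<and> b \<notin> X)"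
  have "proper_subgraph (V - X) E' V E"
    using G uX unfolding proper_subgraph_def simple_graph_def E'_def by auto
  then have col: "sq_list_colorable (V - X) E' (k+1)" using minimal by blast
  have h: "\<forall>v\<in>V-X. finite (L v) \<and> card (L v) = k+1" using L by auto
  have "\<exists>c. (\<forall>v\<in>V-X. c v \<in> L v) \<and> (\<forall>a\<in>V-X. \<forall>b\<in>V-X. sq_adj E' a b \<longrightarrow> c a \<noteq> c b)"
    using col[unfolded sq_list_colorable_def, rule_format, of L, OF h[rule_format]] .
  then obtain c where c1: "\<forall>v\<in>V-X. c v \<in> L v"
     and c2: "\<forall>a\<in>V-X. \<forall>b\<in>V-X. sq_adj E' a b \<longrightarrow> c a \<noteq> c b" by blast
  have c3: "\<forall>a\<in>V-X. \<forall>b\<in>V-X. sq_adj E a b \<longrightarrow> c a \<noteq> c b"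
  proof (intro ballI impI)
    fix a b assume a: "a \<in> V - X" and b: "b \<in> V - X" and s: "sq_adj E a b"
    have "sq_adj E' a b"
    proof -
      have ab: "a \<noteq> b" using s by (simp add: sq_adj_def)
      show ?thesis
      proof (cases "E a b")
        case True then show ?thesis using a b ab by (simp add: sq_adj_def E'_def)
      next
        case False
        then obtain w where w: "E a w" "E w b" using s by (auto simp: sq_adj_def)
        have "w \<notin> X"
        proof
          assume "w \<in> X"
          moreover have "E w a" using w G by (simp add: simple_graph_def)
          ultimately have "a = b" using dmg w a b by blast
          then show False using ab by simp
        qed
        then show ?thesis using w a b ab by (auto simp: sq_adj_def E'_def)
      qed
    qed
    then show "c a \<noteq> c b" using c2 a b by blast
  qed
  show "\<exists>c. (\<forall>v\<in>V. c v \<in> L v) \<and> (\<forall>u\<in>V. \<forall>v\<in>V. sq_adj E u v \<longrightarrow> c u \<noteq> c v)"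
    using ext L c1 c3 unfolding extP_def by blast
qed


lemma deg2_bound:
  assumes G: "simple_graph V E" and d: "deg V E t = 2"
    and nb: "\<forall>w. E t w \<longrightarrow> real (deg V E w) \<le> M - 1" and hM: "2*M \<le> real k"
  shows "card {y\<in>V. sq_adj E t y} \<le> k"
proof -
  have fin: "finite V" using G by (simp add: simple_graph_def)
  have "real (card {y\<in>V. sq_adj E t y}) \<le> real (deg V E t) + (\<Sum>w\<in>{y\<in>V. E t y}. real (deg V E w))"
    using sq_card_bound[OF G, of t] by (simp flip: of_nat_sum)
  also have "(\<Sum>w\<in>{y\<in>V. E t y}. real (deg V E w)) \<le> real (card {y\<in>V. E t y}) * (M - 1)"
    using sum_bounded_above[of "{y\<in>V. E t y}" "\<lambda>w. real (deg V E w)" "M - 1"] nb by auto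
  also have "real (card {y\<in>V. E t y}) = 2" using d by (simp add: deg_def)
  finally show ?thesis using d hM by simp
qed

lemma part_i:
  assumes G: "simple_graph V E"
    and notcol: "\<not> sq_list_colorable V E (k + 1)"
    and minimal: "\<forall>V' E'. proper_subgraph V' E' V E \<longrightarrow> sq_list_colorable V' E' (k + 1)"
    and hM: "2*M \<le> real k" "2 < real k - M"
    and u: "u \<in> V1set V E M"
  shows "\<exists>w0. E u w0 \<and> real (deg V E w0) \<ge> real k - M \<and> (\<forall>w. E u w \<and> w \<noteq> w0 \<longrightarrow> real (deg V E w) < real k - M \<and> deg V E w = 2)"
  using u
proof (cases rule: V1set.cases)
  case (1 v1 S)
  have fin: "finite V" using G by (simp add: simple_graph_def)
  have sym: "\<forall>u v. E u v \<longrightarrow> E v u" using G by (simp add: simple_graph_def)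
  have inV: "\<And>a b. E a b \<Longrightarrow> a \<in> V \<and> b \<in> V" using G by (simp add: simple_graph_def)
  have irr: "\<And>a. \<not> E a a" using G by (simp add: simple_graph_def)
  let ?N = "{y\<in>V. E u y}"
  define A where "A = insert v1 S"
  have finN: "finite ?N" using fin by simp
  have cN: "card ?N = card S + 2" using 1 by (simp add: deg_def)
  have AN: "A \<subseteq> ?N" using 1 inV by (auto simp: A_def)
  have cA: "card A = card S + 1" using 1 by (simp add: A_def)
  have "card (?N - A) = 1" using card_Diff_subset[OF finite_subset[OF AN finN] AN] cN cA by simp
  then obtain w0 where w0: "?N - A = {w0}" by (rule card_1_singletonE)
  have Ew0: "E u w0" and w0A: "w0 \<notin> A" using w0 by blast+
  have Nsub: "\<And>y. E u y \<Longrightarrow> y = w0 \<or> y \<in> A" using w0 inV by blast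
  have Adeg: "\<And>t. t \<in> A \<Longrightarrow> deg V E t = 2 \<and> E t u" using 1 sym by (auto simp: A_def)
  have uA: "u \<notin> A" using Adeg irr by blast
  have Anb: "\<And>t w. t \<in> A \<Longrightarrow> E t w \<Longrightarrow> real (deg V E w) \<le> M - 1"
  proof -
    fix t w assume t: "t \<in> A" and tw: "E t w"
    show "real (deg V E w) \<le> M - 1"
    proof (cases "w = u")
      case True then show ?thesis using 1 by simp
    next
      case False
      show ?thesis
      proof (cases "t = v1")
        case True then show ?thesis using 1 False tw by blast
      next
        case f2: False
        then have "t \<in> S" using t by (simp add: A_def)
        have S1: "\<forall>w\<in>S. \<forall>x. E w x \<and> x \<noteq> u \<longrightarrow> x \<in> V1set V E M" using 1 by fast
        have "w \<in> V1set V E M" using S1 \<open>t \<in> S\<close> False tw by blast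
        then show ?thesis using V1_props[of w V E M] by simp
      qed
    qed
  qed
  have big: "real (deg V E w0) \<ge> real k - M"
  proof (rule ccontr)
    assume small: "\<not> real (deg V E w0) \<ge> real k - M"
    define X where "X = insert u A"
    define g where "g = (\<lambda>t. SOME z. E t z \<and> z \<noteq> u)"
    have gp: "\<And>t y. t \<in> A \<Longrightarrow> E t y \<Longrightarrow> y \<noteq> u \<Longrightarrow> y = g t"
    proof -
      fix t y assume t: "t \<in> A" and ty: "E t y" and yu: "y \<noteq> u"
      obtain z where z: "E t z" "z \<noteq> u" "\<forall>y. E t y \<longrightarrow> y = u \<or> y = z"
        using deg2_nbrs[OF G] Adeg[OF t] by blast
      have "E t (g t) \<and> g t \<noteq> u" unfolding g_def by (rule someI[of _ z]) (use z in blast)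
      then show "y = g t" using z ty yu by metis
    qed
    have dmg: "\<forall>w\<in>X. \<forall>a b. E w a \<longrightarrow> E w b \<longrightarrow> a \<notin> X \<longrightarrow> b \<notin> X \<longrightarrow> a = b"
    proof (intro ballI allI impI)
      fix w a b assume w: "w \<in> X" and wa: "E w a" and wb: "E w b" and a: "a \<notin> X" and b: "b \<notin> X"
      show "a = b"
      proof (cases "w = u")
        case True then show ?thesis using Nsub wa wb a b by (auto simp: X_def)
      next
        case False
        then have "w \<in> A" using w by (simp add: X_def)
        then show ?thesis using gp wa wb a b by (metis X_def insertI1)
      qed
    qed
    have cu: "card {y \<in> V - insert u A. sq_adj E u y} \<le> k"
    proof -
      have sub: "{y \<in> V - insert u A. sq_adj E u y} \<subseteq> insert w0 ({y\<in>V. E w0 y} \<union> g ` A)"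
      proof
        fix y assume y: "y \<in> {y \<in> V - insert u A. sq_adj E u y}"
        then have yV: "y \<in> V" and yu: "y \<noteq> u" and yA: "y \<notin> A" and s: "sq_adj E u y" by auto
        show "y \<in> insert w0 ({y\<in>V. E w0 y} \<union> g ` A)"
        proof (cases "E u y")
          case True then show ?thesis using Nsub yA by blast
        next
          case False
          then obtain w where w: "E u w" "E w y" using s by (auto simp: sq_adj_def)
          show ?thesis
          proof (cases "w = w0")
            case True then show ?thesis using w yV by blast
          next
            case False
            then have "w \<in> A" using Nsub w by blast
            then show ?thesis using gp w yu by blast
          qed
        qed
      qed
      have "card {y \<in> V - insert u A. sq_adj E u y} \<le> card (insert w0 ({y\<in>V. E w0 y} \<union> g ` A))"
        by (rule card_mono[OF _ sub]) (use fin finite_subset[OF AN finN] in auto)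
      also have "\<dots> \<le> Suc (card ({y\<in>V. E w0 y} \<union> g ` A))" using fin finite_subset[OF AN finN] by (simp add: card_insert_if)
      also have "card ({y\<in>V. E w0 y} \<union> g ` A) \<le> card {y\<in>V. E w0 y} + card (g ` A)" by (rule card_Un_le)
      also have "card (g ` A) \<le> card A" using finite_subset[OF AN finN] by (rule card_image_le)
      finally have "card {y \<in> V - insert u A. sq_adj E u y} \<le> deg V E w0 + card S + 2"
        using cA by (simp add: deg_def)
      moreover have du: "deg V E u = card S + 2" using cN by (simp add: deg_def)
      ultimately have "card {y \<in> V - insert u A. sq_adj E u y} \<le> deg V E w0 + deg V E u" by simp
      then have "real (card {y \<in> V - insert u A. sq_adj E u y}) \<le> real (deg V E w0) + real (deg V E u)"
        by (metis of_nat_add of_nat_le_iff)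
      moreover have "real (deg V E u) \<le> M - 1" using V1_props[OF u] by simp
      ultimately show ?thesis using small by linarith
    qed
    have "sq_list_colorable V E (k+1)"
    proof (rule colorable_from[OF G minimal _ _ dmg])
      show "u \<in> X" by (simp add: X_def)
      show "u \<in> V" using 1 by simp
      show "\<forall>L. (\<forall>v\<in>V. finite (L v) \<and> card (L v) = k+1) \<longrightarrow> extP V E L X"
      proof (intro allI impI)
        fix L :: "'a \<Rightarrow> nat set" assume L: "\<forall>v\<in>V. finite (L v) \<and> card (L v) = k+1"
        have "extP V E L ({} \<union> A)"
        proof (rule extP_union[OF fin sym _ _ L extP_empty])
          show "finite A" using finite_subset[OF AN finN] .
          show "\<forall>x\<in>A. x \<in> V \<and> card {y\<in>V. sq_adj E x y} \<le> k"
          proof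
            fix x assume x: "x \<in> A"
            show "x \<in> V \<and> card {y\<in>V. sq_adj E x y} \<le> k"
              using deg2_bound[OF G _ _ hM(1)] Adeg[OF x] Anb[OF x] AN x by blast
          qed
        qed
        then have "extP V E L A" by simp
        moreover have uV: "u \<in> V" using V1_props[OF u] by simp
        ultimately show "extP V E L X" unfolding X_def
          using extP_step[OF fin sym uV uA _ _ cu] L by blast
      qed
    qed
    then show False using notcol by simp
  qed
  show ?thesis
  proof (intro exI conjI allI impI)
    show "E u w0" by (rule Ew0)
    show "real k - M \<le> real (deg V E w0)" by (rule big)
    fix w assume "E u w \<and> w \<noteq> w0"
    then have "w \<in> A" using Nsub by blast
    then show "deg V E w = 2" "real (deg V E w) < real k - M" using Adeg hM by auto
  qed
qed


lemma part_ii: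
  assumes G: "simple_graph V E"
    and pi: "\<forall>u\<in>V1set V E M. \<exists>w0. E u w0 \<and> real (deg V E w0) \<ge> real k - M \<and> (\<forall>w. E u w \<and> w \<noteq> w0 \<longrightarrow> real (deg V E w) < real k - M \<and> deg V E w = 2)"
    and hM: "M - 1 < real k - M" "2 < real k - M"
    and u: "u \<in> V1set V E M" and v: "v \<in> V1set V E M" and uv: "E u v"
  shows False
proof -
  have sym: "\<And>a b. E a b \<Longrightarrow> E b a" using G by (simp add: simple_graph_def)
  obtain w0 where w0: "E u w0" "real (deg V E w0) \<ge> real k - M"
    "\<forall>w. E u w \<and> w \<noteq> w0 \<longrightarrow> real (deg V E w) < real k - M \<and> deg V E w = 2"
    using pi u by blast
  obtain w1 where w1: "E v w1" "real (deg V E w1) \<ge> real k - M"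
    "\<forall>w. E v w \<and> w \<noteq> w1 \<longrightarrow> real (deg V E w) < real k - M \<and> deg V E w = 2"
    using pi v by blast
  have dv: "real (deg V E v) \<le> M - 1" using V1_props[OF v] by simp
  have du: "real (deg V E u) \<le> M - 1" using V1_props[OF u] by simp
  have "v \<noteq> w0" using dv w0(2) hM by auto
  then have dv2: "deg V E v = 2" using w0(3) uv by blast
  have "u \<noteq> w1" using du w1(2) hM by auto
  then have du2: "deg V E u = 2" using w1(3) sym[OF uv] by blast
  from u show False
  proof (cases rule: V1set.cases)
    case (1 v1 S)
    have "E u v1" "deg V E v1 = 2" using 1 by blast+
    have v1w0: "v1 \<noteq> w0" using \<open>deg V E v1 = 2\<close> w0(2) hM by auto
    obtain z where z: "E u z" "z \<noteq> v1" "\<forall>y. E u y \<longrightarrow> y = v1 \<or> y = z"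
      using deg2_nbrs[OF G du2 \<open>E u v1\<close>] by blast
    have "w0 = z" using z(3) w0(1) v1w0 by blast
    then have "v = v1" using z(3) uv \<open>v \<noteq> w0\<close> by blast
    have nb: "\<forall>x. E v1 x \<and> x \<noteq> u \<longrightarrow> real (deg V E x) \<le> M - 1" using 1 by fast
    have "real (deg V E w1) \<le> M - 1" using nb w1(1) \<open>v = v1\<close> \<open>u \<noteq> w1\<close> by metis
    then show False using w1(2) hM by linarith
  qed
qed

theorem lemma3:
  fixes V :: "'a set" and E :: "'a \<Rightarrow> 'a \<Rightarrow> bool"
    and \<epsilon> M :: real and k :: nat
  assumes eps: "0 < \<epsilon>" "\<epsilon> \<le> 1/20"
    and M_def: "M = 6 / \<epsilon>"
    and k_ge: "real k \<ge> 3 / \<epsilon>^2"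
    and G: "simple_graph V E"
    and maxdeg: "\<forall>v\<in>V. deg V E v \<le> k"
    and notcol: "\<not> sq_list_colorable V E (k + 1)"
    and minimal: "\<forall>V' E'. proper_subgraph V' E' V E \<longrightarrow> sq_list_colorable V' E' (k + 1)"
  shows "(\<forall>u\<in>V1set V E M.
            (\<exists>w0. E u w0 \<and> real (deg V E w0) \<ge> real k - M
               \<and> (\<forall>w. E u w \<and> w \<noteq> w0 \<longrightarrow>
                      real (deg V E w) < real k - M \<and> deg V E w = 2)))
       \<and> (\<forall>u\<in>V1set V E M. \<forall>v\<in>V1set V E M. \<not> E u v)
       \<and> V1set V E M \<inter> Tset V E M = {}"
proof -
  define t where "t = 1 / \<epsilon>"
  have t20: "t \<ge> 20" using eps unfolding t_def by (simp add: field_simps)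
  have Mt: "M = 6 * t" using M_def by (simp add: t_def)
  have "3 / \<epsilon>^2 = 3 * t * t" by (simp add: t_def power2_eq_square)
  moreover have "t * t \<ge> 20 * t" using t20 by (simp add: mult_right_mono)
  ultimately have kt: "real k \<ge> 60 * t" using k_ge by linarith
  have hM1: "2*M \<le> real k" "2 < real k - M" "M - 1 < real k - M" using kt Mt t20 by linarith+
  have pi: "\<forall>u\<in>V1set V E M. \<exists>w0. E u w0 \<and> real (deg V E w0) \<ge> real k - M \<and> (\<forall>w. E u w \<and> w \<noteq> w0 \<longrightarrow> real (deg V E w) < real k - M \<and> deg V E w = 2)"
    using part_i[OF G notcol minimal hM1(1,2)] by blast
  have pii: "\<forall>u\<in>V1set V E M. \<forall>v\<in>V1set V E M. \<not> E u v"
    using part_ii[OF G pi hM1(3) hM1(2)] by blast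
  have piii: "V1set V E M \<inter> Tset V E M = {}"
  proof (rule ccontr)
    assume "V1set V E M \<inter> Tset V E M \<noteq> {}"
    then obtain u where u: "u \<in> V1set V E M" "u \<in> Tset V E M" by blast
    obtain w0 where "E u w0" using pi u(1) by blast
    then have "w0 \<in> V1set V E M" using u(2) by (simp add: Tset_def)
    then show False using pii u(1) \<open>E u w0\<close> by blast
  qed
  show ?thesis using pi pii piii by blast
qed

end
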